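(* Let $V:[0,+\infty)\to[0,+\infty)$ be a $C^1$ strictly increasing function with $\lim_{t\to\infty}V(t)=+\infty$, and let $S:=V'$. Let $(X,\mathsf d,\mathfrak m)$ be a metric measure space admitting the generalized asymptotic volume ratio $\mathrm{AVR}^V_{(X,\mathsf d,\mathfrak m)}$ associated to $V$, and suppose there is a constant $k>0$ such that $\mathfrak m(B_r(x))\le k\,V(r)$ for every $x\in X$ and every sufficiently large $r>0$. Let $(\rho_n)_{n\in\mathbb N}$ be functions on $\{(x,y)\in X\times X:x\neq y\}$ satisfying approximation of the identity of radial type associated to $V$. Let $p\ge1$. Then $(\rho_n)_{n\in\mathbb N}$ are non-negative, symmetric, measurable and satisfy the following conditions (A), (B), (C) with $L=\mathrm{AVR}^V_{(X,\mathsf d,\mathfrak m)}$: (A) for every $x\in X$, $\lim_{R\to+\infty}\limsup_{n\to\infty}\int_{B^c_R(x)}\rho_n(x,y)\,\mathrm d\mathfrak m(y)=\lim_{R\to+\infty}\liminf_{n\to\infty}\int_{B^c_R(x)}\rho_n(x,y)\,\mathrm d\mathfrak m(y)=L$, where $B^c_R(x)=\{y:\mathsf d(x,y)\ge R\}$; (B) for every $u\in L^p(X,\mathfrak m)$ with $\mathcal E_{n_0}(u)<+\infty$ for some $n_0\in\mathbb N$, where $\mathcal E_n(u):=\iint_{\{x\neq y\}}|u(x)-u(y)|^p\rho_n(x,y)\,\mathrm d\mathfrak m(x)\,\mathrm d\mathfrak m(y)$, one has $\lim_{n\to\infty}\iint_{\{0<\mathsf d(x,y)<R\}}|u(x)-u(y)|^p\rho_n(x,y)\,\mathrm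 d\mathfrak m(x)\,\mathrm d\mathfrak m(y)=0$ for all $R>0$; (C) for every sufficiently large $R>0$ there is $C=C(R)$ with $\int_{B^c_R(x)}\rho_n(x,y)\,\mathrm d\mathfrak m(y)\le C$ for all $x\in X$, $n\in\mathbb N$.
   Context: A metric measure space is a triple $(X,\mathsf d,\mathfrak m)$ with $(X,\mathsf d)$ complete and separable and $\mathfrak m$ a locally finite non-negative Borel measure with full support. $(X,\mathsf d,\mathfrak m)$ admits the generalized asymptotic volume ratio associated to $V$ if there is $\mathrm{AVR}^V_{(X,\mathsf d,\mathfrak m)}\in[0,+\infty]$ such that for every $x_0\in X$, $\mathrm{AVR}^V_{(X,\mathsf d,\mathfrak m)}=\lim_{r\to+\infty}\mathfrak m(B_r(x_0))/V(r)$. Functions $(\rho_n)$ satisfy approximation of the identity of radial type associated to $V$ if there is a sequence of strictly decreasing functions $\tilde\rho_n\in C^1(0,+\infty)$ such that: (i) $\lim_{n\to\infty}\tilde\rho_n(r)=0$ for all $r>0$; $\lim_{r\to+\infty}\tilde\rho_n(r)V(r)=0$ for all $n$; and $\rho_n(x,y)=\tilde\rho_n(\mathsf d(x,y))$ for all $x\neq y$; (ii) for all $n>m$, the map $r\mapsto\tilde\rho_n(r)/\tilde\rho_m(r)$ is non-decreasing on $(0,+\infty)$; (iii) $\lim_{R\to+\infty}\lim_{n\to\infty}\int_R^{+\infty}S(r)\tilde\rho_n(r)\,\mathrm dr=1$. *)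

theory Defs
  imports "HOL-Analysis.Analysis" "HOL-Probability.Probability"
begin

text \<open>Metric measure space: the metric space is the type (complete and separable,
  i.e. class polish_space); the measure is a Borel measure on the whole space,
  locally finite (each point has a ball of finite measure) with full support.\<close>
definition mms :: "('a::polish_space) measure \<Rightarrow> bool" where
  "mms m \<longleftrightarrow> sets m = sets borel \<and> space m = UNIV
     \<and> (\<forall>x. \<exists>r>0. emeasure m (ball x r) < \<infinity>)
     \<and> (\<forall>x r. r > 0 \<longrightarrow> emeasure m (ball x r) > 0)"

definition has_AVR :: "('a::metric_space) measure \<Rightarrow> (real \<Rightarrow> real) \<Rightarrow> ennreal \<Rightarrow> bool" where
  "has_AVR m V L \<longleftrightarrow>
     (\<forall>x0. ((\<lambda>r. emeasure m (ball x0 r) / ennreal (V r)) \<longlongrightarrow> L) at_top)"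

definition approx_id_radial ::
  "(real \<Rightarrow> real) \<Rightarrow> (real \<Rightarrow> real) \<Rightarrow> (nat \<Rightarrow> 'a::metric_space \<Rightarrow> 'a \<Rightarrow> real) \<Rightarrow> bool" where
  "approx_id_radial V S \<rho> \<longleftrightarrow>
    (\<exists>\<rho>t :: nat \<Rightarrow> real \<Rightarrow> real.
      (\<forall>n. \<rho>t n C1_differentiable_on {0<..} \<and> strict_antimono_on {0<..} (\<rho>t n))
      \<and> (\<forall>r>0. (\<lambda>n. \<rho>t n r) \<longlonglongrightarrow> 0)
      \<and> (\<forall>n. ((\<lambda>r. \<rho>t n r * V r) \<longlongrightarrow> 0) at_top)
      \<and> (\<forall>n x y. x \<noteq> y \<longrightarrow> \<rho> n x y = \<rho>t n (dist x y))
      \<and> (\<forall>n m. n > m \<longrightarrow> mono_on {0<..} (\<lambda>r. \<rho>t n r / \<rho>t m r))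
      \<and> (\<exists>f :: real \<Rightarrow> ennreal.
           (\<forall>\<^sub>F R in at_top.
              (\<lambda>n. \<integral>\<^sup>+ r\<in>{R..}. ennreal (S r * \<rho>t n r) \<partial>lborel) \<longlonglongrightarrow> f R)
           \<and> (f \<longlongrightarrow> 1) at_top))"

definition energy :: "'a measure \<Rightarrow> real \<Rightarrow> ('a \<Rightarrow> 'a \<Rightarrow> real) \<Rightarrow> ('a \<Rightarrow> real) \<Rightarrow> ennreal" where
  "energy m p r u = (\<integral>\<^sup>+ x. (\<integral>\<^sup>+ y. indicator {y. y \<noteq> x} y *
        ennreal (\<bar>u x - u y\<bar> powr p * r x y) \<partial>m) \<partial>m)"

end

theory Submission
  imports Defs
begin

lemma deriv_nonpos_of_antimono:
  fixes g :: "real \<Rightarrow> real"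
  assumes "(g has_real_derivative D) (at x)" "x > 0"
    and "strict_antimono_on {0<..} g"
  shows "D \<le> 0"
proof (rule ccontr)
  assume "\<not> D \<le> 0"
  then obtain d where d: "d > 0" "\<forall>h>0. h < d \<longrightarrow> g x < g (x + h)"
    using DERIV_pos_inc_right[OF assms(1)] by force
  have "g (x + d/2) < g x"
    using assms(3) d(1) assms(2) unfolding monotone_on_def by auto
  moreover have "g x < g (x + d/2)" using d by auto
  ultimately show False by simp
qed

lemma deriv_nonneg_of_mono:
  fixes V :: "real \<Rightarrow> real"
  assumes "(V has_real_derivative D) (at x)" "x > 0"
    and "strict_mono_on {0..} V"
  shows "D \<ge> 0"
proof (rule ccontr)
  assume "\<not> D \<ge> 0"
  then obtain d where d: "d > 0" "\<forall>h>0. h < d \<longrightarrow> V x > V (x + h)"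
    using DERIV_neg_dec_right[OF assms(1)] by force
  have "V x < V (x + d/2)"
    using assms(3) d(1) assms(2) unfolding strict_mono_on_def by auto
  moreover have "V x > V (x + d/2)" using d by auto
  ultimately show False by simp
qed

lemma FTC_g:
  fixes g D :: "real \<Rightarrow> real"
  assumes gd: "\<And>r. r > 0 \<Longrightarrow> (g has_real_derivative D r) (at r)"
    and Dc: "continuous_on {0<..} D"
    and Dnp: "\<And>r. r > 0 \<Longrightarrow> D r \<le> 0"
    and g0: "(g \<longlongrightarrow> 0) at_top"
    and R: "R > 0"
  shows "(\<integral>\<^sup>+r. ennreal (- D r) * indicator {R..} r \<partial>lborel) = ennreal (g R)"
proof -
  define f where "f = (\<lambda>r. - (indicator {0<..} r *\<^sub>R D r))"
  have fm: "f \<in> borel_measurable borel"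
    unfolding f_def by (intro borel_measurable_uminus borel_measurable_continuous_on_indicator Dc) auto
  have "(\<integral>\<^sup>+x. ennreal (f x) * indicator {R ..} x \<partial>lborel) = ennreal (0 - (- g R))"
  proof (rule nn_integral_FTC_atLeast[OF fm])
    fix x assume "R \<le> x"
    then have "x > 0" using R by simp
    then show "((\<lambda>r. - g r) has_real_derivative f x) (at x)"
      unfolding f_def using gd[of x] by (auto intro: derivative_eq_intros)
    show "0 \<le> f x" unfolding f_def using Dnp[of x] \<open>x > 0\<close> by auto
  next
    show "((\<lambda>r. - g r) \<longlongrightarrow> 0) at_top" using tendsto_minus[OF g0] by simp
  qed
  also have "(\<integral>\<^sup>+x. ennreal (f x) * indicator {R ..} x \<partial>lborel)
      = (\<integral>\<^sup>+r. ennreal (- D r) * indicator {R..} r \<partial>lborel)"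
    using R by (intro nn_integral_cong) (auto simp: f_def split: split_indicator)
  finally show ?thesis by simp
qed


lemma pred_Icc_var[measurable]:
  fixes f h :: "'b \<Rightarrow> real"
  assumes [measurable]: "f \<in> borel_measurable M" "h \<in> borel_measurable M"
  shows "Measurable.pred M (\<lambda>x. f x \<in> {a..h x})"
  unfolding atLeastAtMost_iff by measurable

lemma IBP:
  fixes g D V S :: "real \<Rightarrow> real"
  assumes gd: "\<And>r. r > 0 \<Longrightarrow> (g has_real_derivative D r) (at r)"
    and Dc: "continuous_on {0<..} D"
    and Dnp: "\<And>r. r > 0 \<Longrightarrow> D r \<le> 0"
    and g0: "(g \<longlongrightarrow> 0) at_top"
    and gnn: "\<And>r. r > 0 \<Longrightarrow> g r \<ge> 0"
    and Vd: "\<And>r. r > 0 \<Longrightarrow> (V has_real_derivative S r) (at r)"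
    and Sc: "continuous_on {0<..} S"
    and Snn: "\<And>r. r > 0 \<Longrightarrow> S r \<ge> 0"
    and Vmono: "\<And>a b. 0 < a \<Longrightarrow> a \<le> b \<Longrightarrow> V a \<le> V b"
    and Vnn: "\<And>r. r > 0 \<Longrightarrow> V r \<ge> 0"
    and R: "R > 0"
  shows "(\<integral>\<^sup>+r. ennreal (- D r) * indicator {R..} r * ennreal (V r) \<partial>lborel)
       = ennreal (g R * V R) + (\<integral>\<^sup>+t. ennreal (S t * g t) * indicator {R..} t \<partial>lborel)"
proof -
  define Sn where "Sn = (\<lambda>t. indicator {0<..} t *\<^sub>R S t)"
  define Dn where "Dn = (\<lambda>t. - (indicator {0<..} t *\<^sub>R D t))"
  have Snm[measurable]: "Sn \<in> borel_measurable borel"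
    unfolding Sn_def by (intro borel_measurable_continuous_on_indicator Sc) auto
  have Dnm[measurable]: "Dn \<in> borel_measurable borel"
    unfolding Dn_def by (intro borel_measurable_uminus borel_measurable_continuous_on_indicator Dc) auto
  have Vr: "ennreal (V r) = ennreal (V R) + (\<integral>\<^sup>+t. ennreal (Sn t) * indicator {R..r} t \<partial>lborel)"
    if "R \<le> r" for r
  proof -
    have "(\<integral>\<^sup>+t. ennreal (Sn t) * indicator {R..r} t \<partial>lborel) = ennreal (V r - V R)"
    proof (rule nn_integral_FTC_Icc[OF Snm])
      fix x assume "x \<in> {R..r}"
      then have "x > 0" using R by auto
      then show "(V has_real_derivative Sn x) (at x)" "0 \<le> Sn x"
        using Vd[of x] Snn[of x] by (auto simp: Sn_def)
    qed fact
    moreover have "V R \<le> V r" "0 \<le> V R" using Vmono[OF R that] Vnn[OF R] by auto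
    ultimately show ?thesis by (simp add: ennreal_plus[symmetric])
  qed
  have "(\<integral>\<^sup>+r. ennreal (- D r) * indicator {R..} r * ennreal (V r) \<partial>lborel)
     = (\<integral>\<^sup>+r. ennreal (Dn r) * indicator {R..} r * ennreal (V R)
          + (\<integral>\<^sup>+t. ennreal (Dn r) * indicator {R..} r * (ennreal (Sn t) * indicator {R..r} t) \<partial>lborel) \<partial>lborel)"
  proof (intro nn_integral_cong)
    fix r :: real
    show "ennreal (- D r) * indicator {R..} r * ennreal (V r) = ennreal (Dn r) * indicator {R..} r * ennreal (V R)
          + (\<integral>\<^sup>+t. ennreal (Dn r) * indicator {R..} r * (ennreal (Sn t) * indicator {R..r} t) \<partial>lborel)"
    proof (cases "R \<le> r")
      case True
      then have "r > 0" using R by simp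
      have "ennreal (- D r) * indicator {R..} r * ennreal (V r) = ennreal (Dn r) * indicator {R..} r * (ennreal (V R) + (\<integral>\<^sup>+t. ennreal (Sn t) * indicator {R..r} t \<partial>lborel))"
        using Vr[OF True] \<open>r > 0\<close> by (simp add: Dn_def)
      also have "\<dots> = ennreal (Dn r) * indicator {R..} r * ennreal (V R) + ennreal (Dn r) * indicator {R..} r * (\<integral>\<^sup>+t. ennreal (Sn t) * indicator {R..r} t \<partial>lborel)"
        by (simp add: distrib_left)
      also have "ennreal (Dn r) * indicator {R..} r * (\<integral>\<^sup>+t. ennreal (Sn t) * indicator {R..r} t \<partial>lborel) = (\<integral>\<^sup>+t. ennreal (Dn r) * indicator {R..} r * (ennreal (Sn t) * indicator {R..r} t) \<partial>lborel)"
        by (rule nn_integral_cmult[symmetric]) measurable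
      finally show ?thesis .
    qed simp
  qed
  also have "\<dots> = (\<integral>\<^sup>+r. ennreal (Dn r) * indicator {R..} r * ennreal (V R) \<partial>lborel)
     + (\<integral>\<^sup>+r. (\<integral>\<^sup>+t. ennreal (Dn r) * indicator {R..} r * (ennreal (Sn t) * indicator {R..r} t) \<partial>lborel) \<partial>lborel)"
    by (rule nn_integral_add) measurable
  also have "(\<integral>\<^sup>+r. ennreal (Dn r) * indicator {R..} r * ennreal (V R) \<partial>lborel)
      = (\<integral>\<^sup>+r. ennreal (Dn r) * indicator {R..} r \<partial>lborel) * ennreal (V R)"
    by (rule nn_integral_multc) measurable
  also have "(\<integral>\<^sup>+r. ennreal (Dn r) * indicator {R..} r \<partial>lborel) = (\<integral>\<^sup>+r. ennreal (- D r) * indicator {R..} r \<partial>lborel)"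
    using R by (intro nn_integral_cong) (auto simp: Dn_def split: split_indicator)
  also have "(\<integral>\<^sup>+r. ennreal (- D r) * indicator {R..} r \<partial>lborel) * ennreal (V R) = ennreal (g R * V R)"
    using Vnn[OF R] FTC_g[OF gd Dc Dnp g0 R] gnn[OF R] by (simp add: ennreal_mult)
  also have "(\<integral>\<^sup>+r. (\<integral>\<^sup>+t. ennreal (Dn r) * indicator {R..} r * (ennreal (Sn t) * indicator {R..r} t) \<partial>lborel) \<partial>lborel)
     = (\<integral>\<^sup>+t. (\<integral>\<^sup>+r. ennreal (Dn r) * indicator {R..} r * (ennreal (Sn t) * indicator {R..r} t) \<partial>lborel) \<partial>lborel)"
  proof -
    have ps: "pair_sigma_finite lborel lborel" by (simp add: pair_sigma_finite_def lborel.sigma_finite_measure_axioms)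
    show ?thesis
      by (rule pair_sigma_finite.Fubini'[OF ps, where f="\<lambda>t r. ennreal (Dn r) * indicator {R..} r * (ennreal (Sn t) * indicator {R..r} t)"]) measurable
  qed
  also have "\<dots> = (\<integral>\<^sup>+t. ennreal (S t * g t) * indicator {R..} t \<partial>lborel)"
  proof (intro nn_integral_cong)
    fix t :: real
    show "(\<integral>\<^sup>+r. ennreal (Dn r) * indicator {R..} r * (ennreal (Sn t) * indicator {R..r} t) \<partial>lborel)
         = ennreal (S t * g t) * indicator {R..} t"
    proof (cases "R \<le> t")
      case True
      then have t: "t > 0" using R by simp
      have "(\<integral>\<^sup>+r. ennreal (Dn r) * indicator {R..} r * (ennreal (Sn t) * indicator {R..r} t) \<partial>lborel)
          = (\<integral>\<^sup>+r. ennreal (Dn r) * indicator {t..} r * ennreal (S t) \<partial>lborel)"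
        using True t R by (intro nn_integral_cong) (auto simp: Dn_def Sn_def split: split_indicator)
      also have "\<dots> = (\<integral>\<^sup>+r. ennreal (Dn r) * indicator {t..} r \<partial>lborel) * ennreal (S t)"
        by (rule nn_integral_multc) measurable
      also have "(\<integral>\<^sup>+r. ennreal (Dn r) * indicator {t..} r \<partial>lborel) = (\<integral>\<^sup>+r. ennreal (- D r) * indicator {t..} r \<partial>lborel)"
        using t by (intro nn_integral_cong) (auto simp: Dn_def split: split_indicator)
      finally show ?thesis using FTC_g[OF gd Dc Dnp g0 t] True Snn[OF t] gnn[OF t]
        by (simp add: ennreal_mult mult.commute)
    qed (auto split: split_indicator)
  qed
  finally show ?thesis .
qed


lemma pred_gt_var[measurable]:
  fixes f h :: "'b \<Rightarrow> real"
  assumes [measurable]: "f \<in> borel_measurable M" "h \<in> borel_measurable M"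
  shows "Measurable.pred M (\<lambda>x. f x \<in> {h x<..})"
  unfolding greaterThan_iff by measurable

lemma pred_ge_var[measurable]:
  fixes f h :: "'b \<Rightarrow> real"
  assumes [measurable]: "f \<in> borel_measurable M"
  shows "Measurable.pred M (\<lambda>x. f x \<in> {a..})"
  unfolding atLeast_iff by measurable

lemma LC:
  fixes g D :: "real \<Rightarrow> real" and m :: "'a::polish_space measure"
  assumes sm: "sets m = sets borel" and sf: "sigma_finite_measure m"
    and gd: "\<And>r. r > 0 \<Longrightarrow> (g has_real_derivative D r) (at r)"
    and Dc: "continuous_on {0<..} D"
    and Dnp: "\<And>r. r > 0 \<Longrightarrow> D r \<le> 0"
    and g0: "(g \<longlongrightarrow> 0) at_top"
    and R: "R > 0"
  shows "(\<integral>\<^sup>+y. ennreal (g (dist x y)) * indicator {y. dist x y \<ge> R} y \<partial>m)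
     = (\<integral>\<^sup>+r. ennreal (- D r) * indicator {R..} r * emeasure m {y. R \<le> dist x y \<and> dist x y < r} \<partial>lborel)"
proof -
  define Dn where "Dn = (\<lambda>t. - (indicator {0<..} t *\<^sub>R D t))"
  have Dnm[measurable]: "Dn \<in> borel_measurable borel"
    unfolding Dn_def by (intro borel_measurable_uminus borel_measurable_continuous_on_indicator Dc) auto
  have spm: "space m = UNIV" using sets_eq_imp_space_eq[OF sm] by simp
  have msets: "{y. R \<le> dist x y \<and> dist x y < r} \<in> sets m" for r
  proof -
    have "{y. R \<le> dist x y \<and> dist x y < r} \<in> sets borel" by measurable
    then show ?thesis using sm by simp
  qed
  have "(\<integral>\<^sup>+y. ennreal (g (dist x y)) * indicator {y. dist x y \<ge> R} y \<partial>m)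
     = (\<integral>\<^sup>+y. (\<integral>\<^sup>+r. ennreal (Dn r) * indicator {R..} (dist x y) * indicator {dist x y<..} r \<partial>lborel) \<partial>m)"
  proof (intro nn_integral_cong)
    fix y
    show "ennreal (g (dist x y)) * indicator {y. dist x y \<ge> R} y
       = (\<integral>\<^sup>+r. ennreal (Dn r) * indicator {R..} (dist x y) * indicator {dist x y<..} r \<partial>lborel)"
    proof (cases "R \<le> dist x y")
      case True
      let ?d = "dist x y"
      have d: "?d > 0" using True R by linarith
      have "(\<integral>\<^sup>+r. ennreal (Dn r) * indicator {R..} (dist x y) * indicator {dist x y<..} r \<partial>lborel)
          = (\<integral>\<^sup>+r. ennreal (- D r) * indicator {?d..} r \<partial>lborel)"
      proof (rule nn_integral_cong_AE)
        show "AE r in lborel. ennreal (Dn r) * indicator {R..} (dist x y) * indicator {dist x y<..} r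
             = ennreal (- D r) * indicator {?d..} r"
          using AE_lborel_singleton[of ?d]
        proof eventually_elim
          case (elim r)
          then show ?case using True d by (auto simp: Dn_def split: split_indicator; smt (verit) d)
        qed
      qed
      also have "\<dots> = ennreal (g ?d)" by (rule FTC_g[OF gd Dc Dnp g0 d])
      finally show ?thesis using True by simp
    qed simp
  qed
  also have "\<dots> = (\<integral>\<^sup>+r. (\<integral>\<^sup>+y. ennreal (Dn r) * indicator {R..} (dist x y) * indicator {dist x y<..} r \<partial>m) \<partial>lborel)"
  proof -
    have ps: "pair_sigma_finite lborel m"
      using sf by (simp add: pair_sigma_finite_def lborel.sigma_finite_measure_axioms)
    have "(\<lambda>(r, y). ennreal (Dn r) * indicator {R..} (dist x y) * indicator {dist x y<..} r) \<in> borel_measurable (lborel \<Otimes>\<^sub>M borel)"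
      by measurable
    have "(\<lambda>(r, y). ennreal (Dn r) * indicator {R..} (dist x y) * indicator {dist x y<..} r) \<in> borel_measurable (lborel \<Otimes>\<^sub>M m)"
    proof -
      have eq: "measurable (lborel \<Otimes>\<^sub>M m) (borel :: ennreal measure) = measurable (lborel \<Otimes>\<^sub>M borel) borel"
        by (rule measurable_cong_sets[OF sets_pair_measure_cong[OF refl sm] refl])
      show ?thesis unfolding eq by fact
    qed
    then show ?thesis
      by (rule pair_sigma_finite.Fubini'[OF ps])
  qed
  also have "\<dots> = (\<integral>\<^sup>+r. ennreal (- D r) * indicator {R..} r * emeasure m {y. R \<le> dist x y \<and> dist x y < r} \<partial>lborel)"
  proof (intro nn_integral_cong)
    fix r :: real
    have "(\<integral>\<^sup>+y. ennreal (Dn r) * indicator {R..} (dist x y) * indicator {dist x y<..} r \<partial>m)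
        = (\<integral>\<^sup>+y. ennreal (Dn r) * indicator {y. R \<le> dist x y \<and> dist x y < r} y \<partial>m)"
      by (intro nn_integral_cong) (auto split: split_indicator)
    also have "\<dots> = ennreal (Dn r) * emeasure m {y. R \<le> dist x y \<and> dist x y < r}"
      by (rule nn_integral_cmult_indicator[OF msets])
    also have "\<dots> = ennreal (- D r) * indicator {R..} r * emeasure m {y. R \<le> dist x y \<and> dist x y < r}"
    proof (cases "R \<le> r")
      case True
      then show ?thesis using R by (simp add: Dn_def)
    next
      case False
      then have "{y. R \<le> dist x y \<and> dist x y < r} = {}" by auto
      then show ?thesis by (simp only: emeasure_empty) simp
    qed
    finally show "(\<integral>\<^sup>+y. ennreal (Dn r) * indicator {R..} (dist x y) * indicator {dist x y<..} r \<partial>m)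
        = ennreal (- D r) * indicator {R..} r * emeasure m {y. R \<le> dist x y \<and> dist x y < r}" .
  qed
  finally show ?thesis .
qed


lemma meas_ind:
  fixes \<phi> :: "real \<Rightarrow> real"
  assumes c: "continuous_on {0<..} \<phi>" and R: "R > 0"
  shows "(\<lambda>r. ennreal (\<phi> r) * indicator {R..} r) \<in> borel_measurable borel"
proof -
  have [measurable]: "(\<lambda>r. indicator {0<..} r *\<^sub>R \<phi> r) \<in> borel_measurable borel"
    by (intro borel_measurable_continuous_on_indicator c) auto
  have "(\<lambda>r. ennreal (indicator {0<..} r *\<^sub>R \<phi> r) * indicator {R..} r) \<in> borel_measurable borel"
    by measurable
  then show ?thesis
    by (rule measurable_cong[THEN iffD1, rotated]) (use R in \<open>auto split: split_indicator\<close>)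
qed

lemma meas_F:
  fixes m :: "'a::polish_space measure"
  assumes sm: "sets m = sets borel" and sf: "sigma_finite_measure m"
  shows "(\<lambda>r. emeasure m {y. R \<le> dist x y \<and> dist x y < r}) \<in> borel_measurable borel"
proof -
  have "(\<lambda>(r, y). indicator {R..} (dist x y) * indicator {dist x y<..} r :: ennreal) \<in> borel_measurable (borel \<Otimes>\<^sub>M borel)"
    by measurable
  moreover have eq: "measurable (borel \<Otimes>\<^sub>M m) (borel :: ennreal measure) = measurable (borel \<Otimes>\<^sub>M borel) borel"
    by (rule measurable_cong_sets[OF sets_pair_measure_cong[OF refl sm] refl])
  ultimately have "(\<lambda>r. \<integral>\<^sup>+y. indicator {R..} (dist x y) * indicator {dist x y<..} r \<partial>m) \<in> borel_measurable borel"
    by (intro sigma_finite_measure.borel_measurable_nn_integral[OF sf]) (simp add: eq)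
  moreover have "(\<integral>\<^sup>+y. indicator {R..} (dist x y) * indicator {dist x y<..} r \<partial>m) = emeasure m {y. R \<le> dist x y \<and> dist x y < r}" for r
  proof -
    have "{y. R \<le> dist x y \<and> dist x y < r} \<in> sets borel" by measurable
    then have s: "{y. R \<le> dist x y \<and> dist x y < r} \<in> sets m" using sm by simp
    have "(\<integral>\<^sup>+y. indicator {R..} (dist x y) * indicator {dist x y<..} r \<partial>m) = (\<integral>\<^sup>+y. indicator {y. R \<le> dist x y \<and> dist x y < r} y \<partial>m)"
      by (intro nn_integral_cong) (auto split: split_indicator)
    also have "\<dots> = emeasure m {y. R \<le> dist x y \<and> dist x y < r}" using s by simp
    finally show ?thesis .
  qed
  ultimately show ?thesis by simp
qed

lemma tail_sup:
  fixes h :: "real \<Rightarrow> ennreal"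
  assumes "(h \<longlongrightarrow> L) at_top"
  shows "((\<lambda>R. SUP r\<in>{R..}. h r) \<longlongrightarrow> L) at_top"
proof (rule order_tendstoI)
  fix a assume "a < L"
  then have "eventually (\<lambda>r. a < h r) at_top" using assms order_tendstoD(1) by blast
  then show "eventually (\<lambda>R. a < (SUP r\<in>{R..}. h r)) at_top"
    by eventually_elim (meson atLeast_iff less_SUP_iff order_refl)
next
  fix a assume "L < a"
  then obtain b where b: "L < b" "b < a" using dense by blast
  then have "eventually (\<lambda>r. h r < b) at_top" using assms order_tendstoD(2) by blast
  then obtain N where N: "\<And>r. r \<ge> N \<Longrightarrow> h r < b" by (auto simp: eventually_at_top_linorder)
  show "eventually (\<lambda>R. (SUP r\<in>{R..}. h r) < a) at_top"
    unfolding eventually_at_top_linorder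
  proof (intro exI allI impI)
    fix R assume "R \<ge> N"
    then have "(SUP r\<in>{R..}. h r) \<le> b" using N by (intro SUP_least) (auto intro: less_imp_le)
    then show "(SUP r\<in>{R..}. h r) < a" using b by simp
  qed
qed

lemma tail_inf:
  fixes h :: "real \<Rightarrow> ennreal"
  assumes "(h \<longlongrightarrow> L) at_top"
  shows "((\<lambda>R. INF r\<in>{R..}. h r) \<longlongrightarrow> L) at_top"
proof (rule order_tendstoI)
  fix a assume "L < a"
  then have "eventually (\<lambda>r. h r < a) at_top" using assms order_tendstoD(2) by blast
  then show "eventually (\<lambda>R. (INF r\<in>{R..}. h r) < a) at_top"
    by eventually_elim (meson atLeast_iff INF_less_iff order_refl)
next
  fix a assume "a < L"
  then obtain b where b: "a < b" "b < L" using dense by blast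
  then have "eventually (\<lambda>r. b < h r) at_top" using assms order_tendstoD(1) by blast
  then obtain N where N: "\<And>r. r \<ge> N \<Longrightarrow> b < h r" by (auto simp: eventually_at_top_linorder)
  show "eventually (\<lambda>R. a < (INF r\<in>{R..}. h r)) at_top"
    unfolding eventually_at_top_linorder
  proof (intro exI allI impI)
    fix R assume "R \<ge> N"
    then have "b \<le> (INF r\<in>{R..}. h r)" using N by (intro INF_greatest) (auto intro: less_imp_le)
    then show "a < (INF r\<in>{R..}. h r)" using b by simp
  qed
qed

lemma bounded_ennreal_seq:
  fixes a :: "nat \<Rightarrow> ennreal"
  assumes fin: "\<And>n. a n < \<infinity>" and lim: "a \<longlonglongrightarrow> l" and l: "l < \<infinity>"
  shows "\<exists>B::real. B \<ge> 0 \<and> (\<forall>n. a n \<le> ennreal B)"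
proof -
  obtain b where b: "l < b" "b < \<infinity>" using dense[OF l] by blast
  have "eventually (\<lambda>n. a n < b) sequentially" using lim b(1) order_tendstoD(2) by blast
  then obtain N where N: "\<And>n. n \<ge> N \<Longrightarrow> a n < b" by (auto simp: eventually_sequentially)
  define B' where "B' = (\<Sum>i<N. a i) + b"
  have B'fin: "B' < \<infinity>" unfolding B'_def using b fin by (simp add: ennreal_sum_less_top less_top)
  have le: "a n \<le> B'" for n
  proof (cases "n < N")
    case True
    then have "a n \<le> (\<Sum>i<N. a i)" by (intro member_le_sum) auto
    then show ?thesis unfolding B'_def by (meson add_increasing2 order_trans zero_le le_iff_add)
  next
    case False
    then have "a n \<le> b" using N[of n] by simp
    then show ?thesis unfolding B'_def by (simp add: add_increasing)
  qed
  show ?thesis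
    using le B'fin by (intro exI[of _ "enn2real B'"]) (simp add: less_top)
qed


context
  fixes g D V S :: "real \<Rightarrow> real" and m :: "'a::polish_space measure" and x :: 'a and R :: real
  assumes sm: "sets m = sets borel" and sf: "sigma_finite_measure m"
    and gd: "\<And>r. r > 0 \<Longrightarrow> (g has_real_derivative D r) (at r)"
    and Dc: "continuous_on {0<..} D"
    and Dnp: "\<And>r. r > 0 \<Longrightarrow> D r \<le> 0"
    and g0: "(g \<longlongrightarrow> 0) at_top"
    and gnn: "\<And>r. r > 0 \<Longrightarrow> g r \<ge> 0"
    and Vd: "\<And>r. r > 0 \<Longrightarrow> (V has_real_derivative S r) (at r)"
    and Sc: "continuous_on {0<..} S"
    and Snn: "\<And>r. r > 0 \<Longrightarrow> S r \<ge> 0"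
    and Vmono: "\<And>a b. 0 < a \<Longrightarrow> a \<le> b \<Longrightarrow> V a \<le> V b"
    and Vnn: "\<And>r. r > 0 \<Longrightarrow> V r \<ge> 0"
    and R: "R > 0"
begin

lemma Vcont: "continuous_on {0<..} V"
  using Vd by (intro continuous_at_imp_continuous_on) (auto intro: DERIV_isCont)

lemma meas_DV: "(\<lambda>r. ennreal (- D r) * indicator {R..} r * ennreal (V r)) \<in> borel_measurable borel"
proof -
  have "(\<lambda>r. ennreal (- D r * V r) * indicator {R..} r) \<in> borel_measurable borel"
    by (intro meas_ind R continuous_intros Dc Vcont)
  then show ?thesis
  proof (rule measurable_cong[THEN iffD1, rotated])
    fix w :: real
    show "ennreal (- D w * V w) * indicator {R..} w = ennreal (- D w) * indicator {R..} w * ennreal (V w)"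
    proof (cases "R \<le> w")
      case True
      then have "w > 0" using R by simp
      then have "ennreal (- D w * V w) = ennreal (- D w) * ennreal (V w)"
        using Dnp[of w] Vnn[of w] by (intro ennreal_mult) auto
      then show ?thesis using True by simp
    qed simp
  qed
qed

lemma meas_D: "(\<lambda>r. ennreal (- D r) * indicator {R..} r) \<in> borel_measurable borel"
  by (intro meas_ind R continuous_intros Dc)

lemma upper_bound:
  assumes hb: "\<forall>r\<ge>R. emeasure m (ball x r) \<le> c * ennreal (V r)"
  shows "(\<integral>\<^sup>+y. ennreal (g (dist x y)) * indicator {y. dist x y \<ge> R} y \<partial>m)
     \<le> c * (ennreal (g R * V R) + (\<integral>\<^sup>+t. ennreal (S t * g t) * indicator {R..} t \<partial>lborel))"
proof -
  have "(\<integral>\<^sup>+y. ennreal (g (dist x y)) * indicator {y. dist x y \<ge> R} y \<partial>m)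
     = (\<integral>\<^sup>+r. ennreal (- D r) * indicator {R..} r * emeasure m {y. R \<le> dist x y \<and> dist x y < r} \<partial>lborel)"
    by (rule LC[OF sm sf gd Dc Dnp g0 R])
  also have "\<dots> \<le> (\<integral>\<^sup>+r. c * (ennreal (- D r) * indicator {R..} r * ennreal (V r)) \<partial>lborel)"
  proof (intro nn_integral_mono)
    fix r :: real
    show "ennreal (- D r) * indicator {R..} r * emeasure m {y. R \<le> dist x y \<and> dist x y < r}
        \<le> c * (ennreal (- D r) * indicator {R..} r * ennreal (V r))"
    proof (cases "R \<le> r")
      case True
      have "emeasure m {y. R \<le> dist x y \<and> dist x y < r} \<le> emeasure m (ball x r)"
        by (rule emeasure_mono) (auto simp: sm dist_commute)
      also have "\<dots> \<le> c * ennreal (V r)" using hb True by auto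
      finally have "ennreal (- D r) * emeasure m {y. R \<le> dist x y \<and> dist x y < r} \<le> ennreal (- D r) * (c * ennreal (V r))"
        by (rule mult_left_mono) simp
      then show ?thesis using True by (simp add: mult_ac)
    qed simp
  qed
  also have "\<dots> = c * (\<integral>\<^sup>+r. ennreal (- D r) * indicator {R..} r * ennreal (V r) \<partial>lborel)"
    by (rule nn_integral_cmult) (use meas_DV in simp)
  also have "\<dots> = c * (ennreal (g R * V R) + (\<integral>\<^sup>+t. ennreal (S t * g t) * indicator {R..} t \<partial>lborel))"
    using IBP[OF gd Dc Dnp g0 gnn Vd Sc Snn Vmono Vnn R] by (simp only:)
  finally show ?thesis .
qed

lemma lower_bound:
  assumes hb: "\<forall>r\<ge>R. c * ennreal (V r) \<le> emeasure m (ball x r)"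
  shows "c * (ennreal (g R * V R) + (\<integral>\<^sup>+t. ennreal (S t * g t) * indicator {R..} t \<partial>lborel))
     \<le> (\<integral>\<^sup>+y. ennreal (g (dist x y)) * indicator {y. dist x y \<ge> R} y \<partial>m) + emeasure m (ball x R) * ennreal (g R)"
proof -
  let ?F = "\<lambda>r. emeasure m {y. R \<le> dist x y \<and> dist x y < r}"
  let ?G = "emeasure m (ball x R)"
  have "c * (ennreal (g R * V R) + (\<integral>\<^sup>+t. ennreal (S t * g t) * indicator {R..} t \<partial>lborel))
      = c * (\<integral>\<^sup>+r. ennreal (- D r) * indicator {R..} r * ennreal (V r) \<partial>lborel)"
    using IBP[OF gd Dc Dnp g0 gnn Vd Sc Snn Vmono Vnn R] by (simp only:)
  also have "\<dots> = (\<integral>\<^sup>+r. c * (ennreal (- D r) * indicator {R..} r * ennreal (V r)) \<partial>lborel)"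
    by (rule nn_integral_cmult[symmetric]) (use meas_DV in simp)
  also have "\<dots> \<le> (\<integral>\<^sup>+r. ennreal (- D r) * indicator {R..} r * ?F r + ennreal (- D r) * indicator {R..} r * ?G \<partial>lborel)"
  proof (intro nn_integral_mono)
    fix r :: real
    show "c * (ennreal (- D r) * indicator {R..} r * ennreal (V r))
        \<le> ennreal (- D r) * indicator {R..} r * ?F r + ennreal (- D r) * indicator {R..} r * ?G"
    proof (cases "R \<le> r")
      case True
      have "c * ennreal (V r) \<le> emeasure m (ball x r)" using hb True by auto
      also have "ball x r \<subseteq> {y. R \<le> dist x y \<and> dist x y < r} \<union> ball x R"
        by (auto simp: dist_commute)
      then have "emeasure m (ball x r) \<le> emeasure m ({y. R \<le> dist x y \<and> dist x y < r} \<union> ball x R)"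
        by (intro emeasure_mono) (auto simp: sm)
      also have "\<dots> \<le> ?F r + ?G"
      proof (rule emeasure_subadditive)
        have "{y. R \<le> dist x y \<and> dist x y < r} \<in> sets borel" by measurable
        then show "{y. R \<le> dist x y \<and> dist x y < r} \<in> sets m" using sm by simp
      qed (simp add: sm)
      finally have "ennreal (- D r) * (c * ennreal (V r)) \<le> ennreal (- D r) * (?F r + ?G)"
        by (rule mult_left_mono) simp
      then show ?thesis using True by (simp add: mult_ac distrib_left)
    qed simp
  qed
  also have "\<dots> = (\<integral>\<^sup>+r. ennreal (- D r) * indicator {R..} r * ?F r \<partial>lborel) + (\<integral>\<^sup>+r. ennreal (- D r) * indicator {R..} r * ?G \<partial>lborel)"
    using meas_D meas_F[OF sm sf, of R x] by (intro nn_integral_add) simp_all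
  also have "(\<integral>\<^sup>+r. ennreal (- D r) * indicator {R..} r * ?G \<partial>lborel) = (\<integral>\<^sup>+r. ennreal (- D r) * indicator {R..} r \<partial>lborel) * ?G"
    using meas_D by (intro nn_integral_multc) simp
  also have "\<dots> = ?G * ennreal (g R)"
    by (simp add: FTC_g[OF gd Dc Dnp g0 R] mult.commute)
  also have "(\<integral>\<^sup>+r. ennreal (- D r) * indicator {R..} r * ?F r \<partial>lborel) = (\<integral>\<^sup>+y. ennreal (g (dist x y)) * indicator {y. dist x y \<ge> R} y \<partial>m)"
    by (rule LC[OF sm sf gd Dc Dnp g0 R, symmetric])
  finally show ?thesis .
qed

end


context
  fixes V S :: "real \<Rightarrow> real" and m :: "'a::polish_space measure"
    and \<rho> :: "nat \<Rightarrow> 'a \<Rightarrow> 'a \<Rightarrow> real" and \<rho>t D :: "nat \<Rightarrow> real \<Rightarrow> real"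
    and k R0 :: real and f :: "real \<Rightarrow> ennreal" and L :: ennreal
  assumes sm: "sets m = sets borel" and spm: "space m = UNIV" and sf: "sigma_finite_measure m"
    and gd: "\<And>n r. r > 0 \<Longrightarrow> (\<rho>t n has_real_derivative D n r) (at r)"
    and Dc: "\<And>n. continuous_on {0<..} (D n)"
    and Dnp: "\<And>n r. r > 0 \<Longrightarrow> D n r \<le> 0"
    and \<rho>cont: "\<And>n. continuous_on {0<..} (\<rho>t n)"
    and Vd: "\<And>r. r > 0 \<Longrightarrow> (V has_real_derivative S r) (at r)"
    and Sc: "continuous_on {0<..} S"
    and Snn: "\<And>r. r > 0 \<Longrightarrow> S r \<ge> 0"
    and Vmono: "\<And>a b. 0 < a \<Longrightarrow> a \<le> b \<Longrightarrow> V a \<le> V b"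
    and Vpos: "\<And>r. r > 0 \<Longrightarrow> V r > 0"
    and Vnn: "\<And>r. r > 0 \<Longrightarrow> V r \<ge> 0"
    and \<rho>pos: "\<And>n r. r > 0 \<Longrightarrow> \<rho>t n r > 0"
    and gnn: "\<And>n r. r > 0 \<Longrightarrow> \<rho>t n r \<ge> 0"
    and \<rho>lim0: "\<And>n. (\<rho>t n \<longlongrightarrow> 0) at_top"
    and lim0: "\<And>r. r > 0 \<Longrightarrow> (\<lambda>n. \<rho>t n r) \<longlonglongrightarrow> 0"
    and req: "\<And>n x y. x \<noteq> y \<Longrightarrow> \<rho> n x y = \<rho>t n (dist x y)"
    and ratio: "\<And>n m. n > m \<Longrightarrow> mono_on {0<..} (\<lambda>r. \<rho>t n r / \<rho>t m r)"
    and fJ: "\<forall>\<^sub>F R in at_top. (\<lambda>n. \<integral>\<^sup>+ r\<in>{R..}. ennreal (S r * \<rho>t n r) \<partial>lborel) \<longlonglongrightarrow> f R"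
    and f1: "(f \<longlongrightarrow> 1) at_top"
    and k: "k > 0"
    and kb: "\<And>x r. r \<ge> R0 \<Longrightarrow> emeasure m (ball x r) \<le> ennreal (k * V r)"
    and AVR: "has_AVR m V L"
begin

definition "gx n = (\<lambda>r. indicator {0<..} r *\<^sub>R \<rho>t n r)"

lemma gx_meas[measurable]: "gx n \<in> borel_measurable borel"
  unfolding gx_def by (intro borel_measurable_continuous_on_indicator \<rho>cont) auto

lemma gx_eq: "x \<noteq> y \<Longrightarrow> \<rho> n x y = gx n (dist x y)"
  using req by (simp add: gx_def)

lemma gx_0: "gx n 0 = 0" by (simp add: gx_def)

lemma meas_mm: "measurable (m \<Otimes>\<^sub>M m) (borel :: 'b::topological_space measure) = measurable (borel \<Otimes>\<^sub>M borel) borel"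
  by (rule measurable_cong_sets[OF sets_pair_measure_cong[OF sm sm] refl])

lemma part_meas: "(\<lambda>(x, y). if x \<noteq> y then \<rho> n x y else 0) \<in> borel_measurable (m \<Otimes>\<^sub>M m)"
proof -
  have "(\<lambda>z. gx n (dist (fst z) (snd z :: 'a))) \<in> borel_measurable (borel \<Otimes>\<^sub>M borel)"
    by measurable
  then have "(\<lambda>z. gx n (dist (fst z) (snd z :: 'a))) \<in> borel_measurable (m \<Otimes>\<^sub>M m)"
    unfolding meas_mm .
  then show ?thesis
    by (rule measurable_cong[THEN iffD1, rotated]) (auto simp: gx_eq gx_0)
qed

lemma partB:
  assumes um: "u \<in> borel_measurable m" and E: "energy m p (\<rho> n0) u < \<infinity>" and R: "R > 0"
  shows "(\<lambda>n. \<integral>\<^sup>+ x. (\<integral>\<^sup>+ y\<in>{y. 0 < dist x y \<and> dist x y < R}.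
                   ennreal (\<bar>u x - u y\<bar> powr p * \<rho> n x y) \<partial>m) \<partial>m) \<longlonglongrightarrow> 0"
proof -
  define c where "c n = \<rho>t n R / \<rho>t n0 R" for n
  define Q where "Q x y = ennreal (\<bar>u x - u y\<bar> powr p * gx n0 (dist x y))" for x y
  have ub[measurable]: "u \<in> borel_measurable borel"
    using um by (simp add: measurable_cong_sets[OF sm refl])
  have Qeq: "indicator {y. y \<noteq> x} y * ennreal (\<bar>u x - u y\<bar> powr p * \<rho> n0 x y) = Q x y" for x y
    by (cases "x = y") (auto simp: Q_def gx_eq gx_0)
  have Qm: "(\<lambda>(x, y). Q x y) \<in> borel_measurable (m \<Otimes>\<^sub>M m)"
  proof -
    have "(\<lambda>z. ennreal (\<bar>u (fst z) - u (snd z)\<bar> powr p * gx n0 (dist (fst z) (snd z)))) \<in> borel_measurable (borel \<Otimes>\<^sub>M borel)"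
      by measurable
    then show ?thesis unfolding meas_mm by (simp add: Q_def case_prod_beta')
  qed
  have Qm1: "Q x \<in> borel_measurable m" for x
    using measurable_Pair2[OF Qm, of x] spm by simp
  have Qm2: "(\<lambda>x. \<integral>\<^sup>+y. Q x y \<partial>m) \<in> borel_measurable m"
    using sigma_finite_measure.borel_measurable_nn_integral[OF sf Qm] .
  have Eeq: "energy m p (\<rho> n0) u = (\<integral>\<^sup>+x. \<integral>\<^sup>+y. Q x y \<partial>m \<partial>m)"
    unfolding energy_def Qeq ..
  have bound: "(\<integral>\<^sup>+ x. (\<integral>\<^sup>+ y\<in>{y. 0 < dist x y \<and> dist x y < R}.
                   ennreal (\<bar>u x - u y\<bar> powr p * \<rho> n x y) \<partial>m) \<partial>m) \<le> ennreal (c n) * energy m p (\<rho> n0) u"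
    if n: "n > n0" for n
  proof -
    have "(\<integral>\<^sup>+ x. (\<integral>\<^sup>+ y\<in>{y. 0 < dist x y \<and> dist x y < R}.
                   ennreal (\<bar>u x - u y\<bar> powr p * \<rho> n x y) \<partial>m) \<partial>m)
        \<le> (\<integral>\<^sup>+ x. (\<integral>\<^sup>+ y. ennreal (c n) * Q x y \<partial>m) \<partial>m)"
    proof (intro nn_integral_mono)
      fix x y
      show "ennreal (\<bar>u x - u y\<bar> powr p * \<rho> n x y) * indicator {y. 0 < dist x y \<and> dist x y < R} y
          \<le> ennreal (c n) * Q x y"
      proof (cases "0 < dist x y \<and> dist x y < R")
        case True
        let ?d = "dist x y"
        have d: "?d > 0" "?d \<le> R" using True by auto
        have "\<rho>t n ?d / \<rho>t n0 ?d \<le> \<rho>t n R / \<rho>t n0 R"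
          using mono_onD[OF ratio[OF n]] d R by auto
        then have le: "\<rho>t n ?d \<le> c n * \<rho>t n0 ?d"
          using \<rho>pos[of ?d n0] d unfolding c_def by (simp add: divide_le_eq mult.commute)
        have "\<rho> n x y = \<rho>t n ?d" "gx n0 ?d = \<rho>t n0 ?d" using d by (auto simp: req gx_def)
        then have "\<bar>u x - u y\<bar> powr p * \<rho> n x y \<le> c n * (\<bar>u x - u y\<bar> powr p * gx n0 ?d)"
          using mult_left_mono[OF le, of "\<bar>u x - u y\<bar> powr p"] by (simp add: mult_ac)
        moreover have "c n \<ge> 0" unfolding c_def using \<rho>pos[of R n] \<rho>pos[of R n0] R by simp
        moreover have "0 \<le> \<bar>u x - u y\<bar> powr p * gx n0 ?d" using gnn[of ?d n0] d by (simp add: gx_def)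
        ultimately show ?thesis using True
          by (simp add: Q_def ennreal_mult[symmetric] ennreal_leI)
      qed simp
    qed
    also have "\<dots> = (\<integral>\<^sup>+ x. ennreal (c n) * (\<integral>\<^sup>+ y. Q x y \<partial>m) \<partial>m)"
      by (intro nn_integral_cong nn_integral_cmult Qm1)
    also have "\<dots> = ennreal (c n) * (\<integral>\<^sup>+ x. (\<integral>\<^sup>+ y. Q x y \<partial>m) \<partial>m)"
      by (intro nn_integral_cmult Qm2)
    finally show ?thesis unfolding Eeq .
  qed
  have "(\<lambda>n. c n) \<longlonglongrightarrow> 0 / \<rho>t n0 R"
    unfolding c_def by (intro tendsto_divide lim0 R tendsto_const) (use \<rho>pos[of R n0] R in simp)
  then have "(\<lambda>n. ennreal (c n)) \<longlonglongrightarrow> ennreal 0" by (intro tendsto_ennrealI) simp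
  then have "(\<lambda>n. energy m p (\<rho> n0) u * ennreal (c n)) \<longlonglongrightarrow> energy m p (\<rho> n0) u * ennreal 0"
    using E by (intro ennreal_tendsto_cmult) simp_all
  then have up: "(\<lambda>n. ennreal (c n) * energy m p (\<rho> n0) u) \<longlonglongrightarrow> 0" by (simp add: mult.commute)
  show ?thesis
  proof (rule tendsto_sandwich[OF _ _ tendsto_const up])
    show "eventually (\<lambda>n. 0 \<le> (\<integral>\<^sup>+ x. (\<integral>\<^sup>+ y\<in>{y. 0 < dist x y \<and> dist x y < R}.
                   ennreal (\<bar>u x - u y\<bar> powr p * \<rho> n x y) \<partial>m) \<partial>m)) sequentially" by simp
    show "eventually (\<lambda>n. (\<integral>\<^sup>+ x. (\<integral>\<^sup>+ y\<in>{y. 0 < dist x y \<and> dist x y < R}.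
                   ennreal (\<bar>u x - u y\<bar> powr p * \<rho> n x y) \<partial>m) \<partial>m) \<le> ennreal (c n) * energy m p (\<rho> n0) u) sequentially"
      using eventually_gt_at_top[of n0] by eventually_elim (rule bound)
  qed
qed

lemma Irep:
  assumes R: "R > 0"
  shows "(\<integral>\<^sup>+ y\<in>{y. dist x y \<ge> R}. ennreal (\<rho> n x y) \<partial>m)
       = (\<integral>\<^sup>+y. ennreal (\<rho>t n (dist x y)) * indicator {y. dist x y \<ge> R} y \<partial>m)"
proof (intro nn_integral_cong)
  fix y
  show "ennreal (\<rho> n x y) * indicator {y. dist x y \<ge> R} y = ennreal (\<rho>t n (dist x y)) * indicator {y. dist x y \<ge> R} y"
  proof (cases "dist x y \<ge> R")
    case True
    then have "x \<noteq> y" using R by auto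
    then show ?thesis by (simp add: req)
  qed simp
qed

lemma I_upper:
  assumes R: "R > 0" and hb: "\<forall>r\<ge>R. emeasure m (ball x r) \<le> c * ennreal (V r)"
  shows "(\<integral>\<^sup>+ y\<in>{y. dist x y \<ge> R}. ennreal (\<rho> n x y) \<partial>m)
     \<le> c * (ennreal (\<rho>t n R * V R) + (\<integral>\<^sup>+ r\<in>{R..}. ennreal (S r * \<rho>t n r) \<partial>lborel))"
  unfolding Irep[OF R]
  apply (rule upper_bound[where g="\<rho>t n" and D="D n"])
  using sm sf gd Dc Dnp \<rho>lim0 gnn Vd Sc Snn Vmono Vnn R hb by auto

lemma I_lower:
  assumes R: "R > 0" and hb: "\<forall>r\<ge>R. c * ennreal (V r) \<le> emeasure m (ball x r)"
  shows "c * (ennreal (\<rho>t n R * V R) + (\<integral>\<^sup>+ r\<in>{R..}. ennreal (S r * \<rho>t n r) \<partial>lborel))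
     \<le> (\<integral>\<^sup>+ y\<in>{y. dist x y \<ge> R}. ennreal (\<rho> n x y) \<partial>m) + emeasure m (ball x R) * ennreal (\<rho>t n R)"
  unfolding Irep[OF R]
  apply (rule lower_bound[where g="\<rho>t n" and D="D n"])
  using sm sf gd Dc Dnp \<rho>lim0 gnn Vd Sc Snn Vmono Vnn R hb by auto

lemma J_ratio:
  assumes nN: "n < N" and R: "R > 0"
  shows "(\<integral>\<^sup>+ r\<in>{R..}. ennreal (S r * \<rho>t n r) \<partial>lborel)
     \<le> ennreal (\<rho>t n R / \<rho>t N R) * (\<integral>\<^sup>+ r\<in>{R..}. ennreal (S r * \<rho>t N r) \<partial>lborel)"
proof -
  let ?c = "\<rho>t n R / \<rho>t N R"
  have c0: "?c \<ge> 0" using \<rho>pos[of R n] \<rho>pos[of R N] R by simp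
  have "(\<integral>\<^sup>+ r\<in>{R..}. ennreal (S r * \<rho>t n r) \<partial>lborel) \<le> (\<integral>\<^sup>+ r. ennreal ?c * (ennreal (S r * \<rho>t N r) * indicator {R..} r) \<partial>lborel)"
  proof (intro nn_integral_mono)
    fix r :: real
    show "ennreal (S r * \<rho>t n r) * indicator {R..} r \<le> ennreal ?c * (ennreal (S r * \<rho>t N r) * indicator {R..} r)"
    proof (cases "R \<le> r")
      case True
      then have r: "r > 0" using R by simp
      have "\<rho>t N R / \<rho>t n R \<le> \<rho>t N r / \<rho>t n r"
        using mono_onD[OF ratio[OF nN]] r R True by auto
      then have "\<rho>t N R * \<rho>t n r \<le> \<rho>t N r * \<rho>t n R"
        using \<rho>pos[of R n] \<rho>pos[of r n] R r by (simp add: divide_le_eq le_divide_eq field_simps)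
      then have "\<rho>t n r \<le> ?c * \<rho>t N r"
        using \<rho>pos[of R N] R by (simp add: field_simps)
      then have "S r * \<rho>t n r \<le> ?c * (S r * \<rho>t N r)"
        using Snn[OF r] by (metis mult.left_commute mult_left_mono)
      moreover have "0 \<le> S r * \<rho>t N r" using Snn[OF r] gnn[OF r] by simp
      ultimately show ?thesis using True c0 by (simp add: ennreal_mult[symmetric] ennreal_leI)
    qed simp
  qed
  also have "\<dots> = ennreal ?c * (\<integral>\<^sup>+ r\<in>{R..}. ennreal (S r * \<rho>t N r) \<partial>lborel)"
    unfolding measurable_lborel2
    by (rule nn_integral_cmult) (simp add: meas_ind[OF continuous_on_mult[OF Sc \<rho>cont] R])
  finally show ?thesis .
qed

lemma good_R: "\<forall>\<^sub>F R in at_top. R \<ge> max R0 1 \<and> f R < 2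
   \<and> (\<lambda>n. \<integral>\<^sup>+ r\<in>{R..}. ennreal (S r * \<rho>t n r) \<partial>lborel) \<longlonglongrightarrow> f R"
proof -
  have "\<forall>\<^sub>F R in at_top. f R < 2" using f1 by (rule order_tendstoD) simp
  then show ?thesis using fJ eventually_ge_at_top[of "max R0 1"] by eventually_elim auto
qed

lemma good_R_props:
  assumes R: "R \<ge> max R0 1" "f R < 2"
    and JR: "(\<lambda>n. \<integral>\<^sup>+ r\<in>{R..}. ennreal (S r * \<rho>t n r) \<partial>lborel) \<longlonglongrightarrow> f R"
  shows "(\<lambda>n. ennreal (\<rho>t n R * V R) + (\<integral>\<^sup>+ r\<in>{R..}. ennreal (S r * \<rho>t n r) \<partial>lborel)) \<longlonglongrightarrow> f R"
    and "\<And>n. (\<integral>\<^sup>+ r\<in>{R..}. ennreal (S r * \<rho>t n r) \<partial>lborel) < \<infinity>"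
proof -
  have R0: "R > 0" using R by simp
  have "(\<lambda>n. \<rho>t n R * V R) \<longlonglongrightarrow> 0 * V R" by (intro tendsto_mult lim0 R0 tendsto_const)
  then have "(\<lambda>n. ennreal (\<rho>t n R * V R)) \<longlonglongrightarrow> ennreal 0" by (intro tendsto_ennrealI) simp
  then show "(\<lambda>n. ennreal (\<rho>t n R * V R) + (\<integral>\<^sup>+ r\<in>{R..}. ennreal (S r * \<rho>t n r) \<partial>lborel)) \<longlonglongrightarrow> f R"
    using tendsto_add[OF _ JR] by fastforce
  have "f R < \<infinity>" using R(2) by (metis ennreal_numeral less_trans infinity_ennreal_def ennreal_less_top)
  then have "\<forall>\<^sub>F n in sequentially. (\<integral>\<^sup>+ r\<in>{R..}. ennreal (S r * \<rho>t n r) \<partial>lborel) < \<infinity>"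
    using JR by (rule order_tendstoD(2)[rotated])
  then obtain N0 where N0: "\<And>n. n \<ge> N0 \<Longrightarrow> (\<integral>\<^sup>+ r\<in>{R..}. ennreal (S r * \<rho>t n r) \<partial>lborel) < \<infinity>"
    by (auto simp: eventually_sequentially)
  fix n
  show "(\<integral>\<^sup>+ r\<in>{R..}. ennreal (S r * \<rho>t n r) \<partial>lborel) < \<infinity>"
  proof (cases "n \<ge> N0")
    case True then show ?thesis using N0 by simp
  next
    case False
    then have "n < N0" by simp
    have "(\<integral>\<^sup>+ r\<in>{R..}. ennreal (S r * \<rho>t n r) \<partial>lborel)
      \<le> ennreal (\<rho>t n R / \<rho>t N0 R) * (\<integral>\<^sup>+ r\<in>{R..}. ennreal (S r * \<rho>t N0 r) \<partial>lborel)"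
      by (rule J_ratio[OF \<open>n < N0\<close> R0])
    also have "\<dots> < \<infinity>" using N0[of N0] by (simp add: ennreal_mult_less_top less_top)
    finally show ?thesis .
  qed
qed

lemma partC: "\<exists>R1. \<forall>R\<ge>R1. \<exists>C::real. \<forall>x n.
          (\<integral>\<^sup>+ y\<in>{y. dist x y \<ge> R}. ennreal (\<rho> n x y) \<partial>m) \<le> ennreal C"
proof -
  obtain R1 where R1: "\<And>R. R \<ge> R1 \<Longrightarrow> R \<ge> max R0 1 \<and> f R < 2
   \<and> (\<lambda>n. \<integral>\<^sup>+ r\<in>{R..}. ennreal (S r * \<rho>t n r) \<partial>lborel) \<longlonglongrightarrow> f R"
    using good_R by (auto simp: eventually_at_top_linorder)
  show ?thesis
  proof (rule exI[of _ R1], intro allI impI)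
    fix R assume "R \<ge> R1"
    then have g: "R \<ge> max R0 1" "f R < 2" "(\<lambda>n. \<integral>\<^sup>+ r\<in>{R..}. ennreal (S r * \<rho>t n r) \<partial>lborel) \<longlonglongrightarrow> f R"
      using R1 by auto
    have R0: "R > 0" using g by simp
    have fin: "f R < \<infinity>" using g(2) by (metis ennreal_numeral less_trans infinity_ennreal_def ennreal_less_top)
    obtain B where B: "B \<ge> 0" "\<And>n. ennreal (\<rho>t n R * V R) + (\<integral>\<^sup>+ r\<in>{R..}. ennreal (S r * \<rho>t n r) \<partial>lborel) \<le> ennreal B"
    proof -
      have "ennreal (\<rho>t n R * V R) + (\<integral>\<^sup>+ r\<in>{R..}. ennreal (S r * \<rho>t n r) \<partial>lborel) < \<infinity>" for n
        using good_R_props(2)[OF g, of n] by (simp add: less_top)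
      from bounded_ennreal_seq[OF this good_R_props(1)[OF g] fin] show ?thesis using that by blast
    qed
    show "\<exists>C::real. \<forall>x n. (\<integral>\<^sup>+ y\<in>{y. dist x y \<ge> R}. ennreal (\<rho> n x y) \<partial>m) \<le> ennreal C"
    proof (intro exI allI)
      fix x n
      have hb: "\<forall>r\<ge>R. emeasure m (ball x r) \<le> ennreal k * ennreal (V r)"
      proof (intro allI impI)
        fix r assume "r \<ge> R"
        then have "r \<ge> R0" "r > 0" using g R0 by auto
        then show "emeasure m (ball x r) \<le> ennreal k * ennreal (V r)"
          using kb[of r x] k Vnn[of r] by (simp add: ennreal_mult)
      qed
      have "(\<integral>\<^sup>+ y\<in>{y. dist x y \<ge> R}. ennreal (\<rho> n x y) \<partial>m)
         \<le> ennreal k * (ennreal (\<rho>t n R * V R) + (\<integral>\<^sup>+ r\<in>{R..}. ennreal (S r * \<rho>t n r) \<partial>lborel))"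
        by (rule I_upper[OF R0 hb])
      also have "\<dots> \<le> ennreal k * ennreal B" by (intro mult_left_mono B(2)) simp
      also have "\<dots> = ennreal (k * B)" using k B(1) by (simp add: ennreal_mult)
      finally show "(\<integral>\<^sup>+ y\<in>{y. dist x y \<ge> R}. ennreal (\<rho> n x y) \<partial>m) \<le> ennreal (k * B)" .
    qed
  qed
qed

lemma partA:
  "((\<lambda>R. limsup (\<lambda>n. \<integral>\<^sup>+ y\<in>{y. dist x y \<ge> R}. ennreal (\<rho> n x y) \<partial>m)) \<longlongrightarrow> L) at_top
 \<and> ((\<lambda>R. liminf (\<lambda>n. \<integral>\<^sup>+ y\<in>{y. dist x y \<ge> R}. ennreal (\<rho> n x y) \<partial>m)) \<longlongrightarrow> L) at_top"
proof -
  define h where "h r = emeasure m (ball x r) / ennreal (V r)" for r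
  define cu where "cu R = (SUP r\<in>{R..}. h r)" for R
  define cl where "cl R = (INF r\<in>{R..}. h r)" for R
  define I where "I n R = (\<integral>\<^sup>+ y\<in>{y. dist x y \<ge> R}. ennreal (\<rho> n x y) \<partial>m)" for n R
  define T where "T n R = ennreal (\<rho>t n R * V R) + (\<integral>\<^sup>+ r\<in>{R..}. ennreal (S r * \<rho>t n r) \<partial>lborel)" for n R
  have hL: "(h \<longlongrightarrow> L) at_top" using AVR unfolding has_AVR_def h_def by blast
  have hV: "emeasure m (ball x r) = h r * ennreal (V r)" if r: "r > 0" for r
  proof -
    have "ennreal (V r) \<noteq> 0" "ennreal (V r) \<noteq> top" using Vpos[OF r] by auto
    then have "ennreal (V r) / ennreal (V r) = 1" by (simp add: divide_eq_1_ennreal)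
    then show ?thesis unfolding h_def by (simp add: ennreal_divide_times)
  qed
  have hk: "h r \<le> ennreal k" if r: "r \<ge> max R0 1" for r
  proof -
    have r0: "r > 0" "r \<ge> R0" using r by auto
    have "ennreal (V r) * h r = emeasure m (ball x r)" using hV[OF r0(1)] by (simp add: mult.commute)
    also have "\<dots> \<le> ennreal (k * V r)" by (rule kb[OF r0(2)])
    also have "\<dots> = ennreal (V r) * ennreal k" using k Vnn[OF r0(1)] by (simp add: ennreal_mult mult.commute)
    finally show ?thesis using Vpos[OF r0(1)] by (subst (asm) ennreal_mult_le_mult_iff) auto
  qed
  have Lk: "L \<le> ennreal k"
    using hL by (rule tendsto_upperbound) (auto intro!: exI[of _ "max R0 1"] hk simp: eventually_at_top_linorder)
  then have Lfin: "L \<noteq> \<infinity>" by (metis ennreal_neq_top top_unique infinity_ennreal_def)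
  have cuL: "(cu \<longlongrightarrow> L) at_top" unfolding cu_def by (rule tail_sup[OF hL])
  have clL: "(cl \<longlongrightarrow> L) at_top" unfolding cl_def by (rule tail_inf[OF hL])
  have cuk: "cu R \<le> ennreal k" if "R \<ge> max R0 1" for R
    unfolding cu_def using that by (intro SUP_least hk) auto
  have clcu: "cl R \<le> cu R" for R
    unfolding cl_def cu_def by (rule INF_le_SUP) auto
  have bounds: "cl R * f R \<le> liminf (\<lambda>n. I n R) \<and> limsup (\<lambda>n. I n R) \<le> cu R * f R"
    if g: "R \<ge> max R0 1" "f R < 2" "(\<lambda>n. \<integral>\<^sup>+ r\<in>{R..}. ennreal (S r * \<rho>t n r) \<partial>lborel) \<longlonglongrightarrow> f R" for R
  proof
    have R0: "R > 0" using g by simp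
    have Tlim: "(\<lambda>n. T n R) \<longlonglongrightarrow> f R" unfolding T_def by (rule good_R_props(1)[OF g])
    have fin: "f R < top" using g(2) by (metis ennreal_numeral less_trans infinity_ennreal_def ennreal_less_top)
    have cufin: "cu R < top" using cuk[OF g(1)] by (metis ennreal_less_top infinity_ennreal_def le_less_trans)
    have clfin: "cl R < top" using clcu[of R] cufin by (rule le_less_trans)
    have Gfin: "emeasure m (ball x R) < top"
      using kb[of R x] g by (metis ennreal_less_top infinity_ennreal_def le_less_trans max.bounded_iff)
    have up: "I n R \<le> cu R * T n R" for n
    proof -
      have "\<forall>r\<ge>R. emeasure m (ball x r) \<le> cu R * ennreal (V r)"
      proof (intro allI impI)
        fix r assume "r \<ge> R"
        then have "r > 0" "h r \<le> cu R" using R0 unfolding cu_def by (auto intro: SUP_upper)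
        then show "emeasure m (ball x r) \<le> cu R * ennreal (V r)" using hV by (simp add: mult_right_mono)
      qed
      then show ?thesis unfolding I_def T_def by (rule I_upper[OF R0])
    qed
    have lo: "cl R * T n R \<le> I n R + emeasure m (ball x R) * ennreal (\<rho>t n R)" for n
    proof -
      have "\<forall>r\<ge>R. cl R * ennreal (V r) \<le> emeasure m (ball x r)"
      proof (intro allI impI)
        fix r assume "r \<ge> R"
        then have "r > 0" "cl R \<le> h r" using R0 unfolding cl_def by (auto intro: INF_lower)
        then show "cl R * ennreal (V r) \<le> emeasure m (ball x r)" using hV by (simp add: mult_right_mono)
      qed
      then show ?thesis unfolding I_def T_def by (rule I_lower[OF R0])
    qed
    have "limsup (\<lambda>n. I n R) \<le> limsup (\<lambda>n. cu R * T n R)"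
      by (intro Limsup_mono always_eventually allI up)
    also have "limsup (\<lambda>n. cu R * T n R) = cu R * f R"
      by (rule lim_imp_Limsup) (simp_all add: ennreal_tendsto_cmult[OF cufin Tlim])
    finally show "limsup (\<lambda>n. I n R) \<le> cu R * f R" .
    have "(\<lambda>n. ennreal (\<rho>t n R)) \<longlonglongrightarrow> ennreal 0" by (intro tendsto_ennrealI lim0 R0)
    then have "(\<lambda>n. emeasure m (ball x R) * ennreal (\<rho>t n R)) \<longlonglongrightarrow> emeasure m (ball x R) * ennreal 0"
      by (intro ennreal_tendsto_cmult Gfin)
    then have Gz: "(\<lambda>n. emeasure m (ball x R) * ennreal (\<rho>t n R)) \<longlonglongrightarrow> 0" by simp
    have "(\<lambda>n. cl R * T n R - emeasure m (ball x R) * ennreal (\<rho>t n R)) \<longlonglongrightarrow> cl R * f R - 0"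
      using clfin fin by (intro tendsto_diff_ennreal ennreal_tendsto_cmult Tlim Gz) (auto simp: ennreal_mult_eq_top_iff)
    then have "cl R * f R = liminf (\<lambda>n. cl R * T n R - emeasure m (ball x R) * ennreal (\<rho>t n R))"
      by (intro lim_imp_Liminf[symmetric]) simp_all
    also have "\<dots> \<le> liminf (\<lambda>n. I n R)"
    proof (intro Liminf_mono always_eventually allI)
      fix n
      have "emeasure m (ball x R) * ennreal (\<rho>t n R) \<noteq> top" using Gfin by (simp add: ennreal_mult_eq_top_iff)
      then show "cl R * T n R - emeasure m (ball x R) * ennreal (\<rho>t n R) \<le> I n R"
        using lo[of n] by (simp add: ennreal_minus_le_iff add.commute)
    qed
    finally show "cl R * f R \<le> liminf (\<lambda>n. I n R)" .
  qed
  have evb: "\<forall>\<^sub>F R in at_top. cl R * f R \<le> liminf (\<lambda>n. I n R) \<and> limsup (\<lambda>n. I n R) \<le> cu R * f R"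
    using good_R by eventually_elim (use bounds in blast)
  have lu: "((\<lambda>R. cu R * f R) \<longlongrightarrow> L * 1) at_top" by (intro tendsto_mult_ennreal cuL f1) simp
  have ll: "((\<lambda>R. cl R * f R) \<longlongrightarrow> L * 1) at_top" by (intro tendsto_mult_ennreal clL f1) simp
  have lel: "liminf (\<lambda>n. I n R) \<le> limsup (\<lambda>n. I n R)" for R
    by (rule Liminf_le_Limsup) simp
  have A1: "((\<lambda>R. limsup (\<lambda>n. I n R)) \<longlongrightarrow> L) at_top"
  proof (rule tendsto_sandwich[OF _ _ ll[simplified] lu[simplified]])
    show "\<forall>\<^sub>F R in at_top. cl R * f R \<le> limsup (\<lambda>n. I n R)"
      using evb by eventually_elim (metis lel order_trans)
    show "\<forall>\<^sub>F R in at_top. limsup (\<lambda>n. I n R) \<le> cu R * f R"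
      using evb by eventually_elim blast
  qed
  have A2: "((\<lambda>R. liminf (\<lambda>n. I n R)) \<longlongrightarrow> L) at_top"
  proof (rule tendsto_sandwich[OF _ _ ll[simplified] lu[simplified]])
    show "\<forall>\<^sub>F R in at_top. cl R * f R \<le> liminf (\<lambda>n. I n R)"
      using evb by eventually_elim blast
    show "\<forall>\<^sub>F R in at_top. liminf (\<lambda>n. I n R) \<le> cu R * f R"
      using evb by eventually_elim (metis lel order_trans)
  qed
  show ?thesis using A1 A2 unfolding I_def by simp
qed

end


theorem mainTheorem2:
  fixes V S :: "real \<Rightarrow> real"
    and m :: "('a::polish_space) measure"
    and \<rho> :: "nat \<Rightarrow> 'a \<Rightarrow> 'a \<Rightarrow> real"
    and L :: ennreal and p :: real
  assumes V_nonneg: "\<forall>t\<ge>0. V t \<ge> 0"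
    and V_deriv: "\<forall>t\<ge>0. (V has_real_derivative S t) (at t within {0..})"
    and S_cont: "continuous_on {0..} S"
    and V_strict: "strict_mono_on {0..} V"
    and V_lim: "filterlim V at_top at_top"
    and mms: "mms m"
    and AVR: "has_AVR m V L"
    and growth: "\<exists>k>0. \<exists>R0. \<forall>x. \<forall>r\<ge>R0. emeasure m (ball x r) \<le> ennreal (k * V r)"
    and approx: "approx_id_radial V S \<rho>"
    and p: "p \<ge> 1"
  shows
    "(\<forall>n x y. x \<noteq> y \<longrightarrow> \<rho> n x y \<ge> 0)
     \<and> (\<forall>n x y. x \<noteq> y \<longrightarrow> \<rho> n x y = \<rho> n y x)
     \<and> (\<forall>n. (\<lambda>(x, y). if x \<noteq> y then \<rho> n x y else 0) \<in> borel_measurable (m \<Otimes>\<^sub>M m))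
     \<and> (\<forall>x.
          ((\<lambda>R. limsup (\<lambda>n. \<integral>\<^sup>+ y\<in>{y. dist x y \<ge> R}. ennreal (\<rho> n x y) \<partial>m)) \<longlongrightarrow> L) at_top
        \<and> ((\<lambda>R. liminf (\<lambda>n. \<integral>\<^sup>+ y\<in>{y. dist x y \<ge> R}. ennreal (\<rho> n x y) \<partial>m)) \<longlongrightarrow> L) at_top)
     \<and> (\<forall>u :: 'a \<Rightarrow> real. u \<in> borel_measurable m
          \<longrightarrow> (\<integral>\<^sup>+ x. ennreal (\<bar>u x\<bar> powr p) \<partial>m) < \<infinity>
          \<longrightarrow> (\<exists>n0. energy m p (\<rho> n0) u < \<infinity>)
          \<longrightarrow> (\<forall>R>0. (\<lambda>n. \<integral>\<^sup>+ x. (\<integral>\<^sup>+ y\<in>{y. 0 < dist x y \<and> dist x y < R}.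
                   ennreal (\<bar>u x - u y\<bar> powr p * \<rho> n x y) \<partial>m) \<partial>m) \<longlonglongrightarrow> 0))
     \<and> (\<exists>R0. \<forall>R\<ge>R0. \<exists>C::real. \<forall>x n.
          (\<integral>\<^sup>+ y\<in>{y. dist x y \<ge> R}. ennreal (\<rho> n x y) \<partial>m) \<le> ennreal C)"
proof -
  obtain \<rho>t :: "nat \<Rightarrow> real \<Rightarrow> real" where H:
      "(\<forall>n. \<rho>t n C1_differentiable_on {0<..} \<and> strict_antimono_on {0<..} (\<rho>t n))
      \<and> (\<forall>r>0. (\<lambda>n. \<rho>t n r) \<longlonglongrightarrow> 0)
      \<and> (\<forall>n. ((\<lambda>r. \<rho>t n r * V r) \<longlongrightarrow> 0) at_top)
      \<and> (\<forall>n x y. x \<noteq> y \<longrightarrow> \<rho> n x y = \<rho>t n (dist x y))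
      \<and> (\<forall>n m. n > m \<longrightarrow> mono_on {0<..} (\<lambda>r. \<rho>t n r / \<rho>t m r))
      \<and> (\<exists>f :: real \<Rightarrow> ennreal.
           (\<forall>\<^sub>F R in at_top.
              (\<lambda>n. \<integral>\<^sup>+ r\<in>{R..}. ennreal (S r * \<rho>t n r) \<partial>lborel) \<longlonglongrightarrow> f R)
           \<and> (f \<longlongrightarrow> 1) at_top)"
    using approx unfolding approx_id_radial_def by (rule exE)
  have C1: "\<And>n. \<rho>t n C1_differentiable_on {0<..}" and anti: "\<And>n. strict_antimono_on {0<..} (\<rho>t n)"
    using H by simp_all
  have lim0: "\<And>r. r > 0 \<Longrightarrow> (\<lambda>n. \<rho>t n r) \<longlonglongrightarrow> 0" using H by simp
  have lV: "\<And>n. ((\<lambda>r. \<rho>t n r * V r) \<longlongrightarrow> 0) at_top" using H by simp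
  have req: "\<And>n x y. x \<noteq> y \<Longrightarrow> \<rho> n x y = \<rho>t n (dist x y)" using H by simp
  have ratio: "\<And>n m. n > m \<Longrightarrow> mono_on {0<..} (\<lambda>r. \<rho>t n r / \<rho>t m r)" using H by simp
  have fex: "\<exists>f :: real \<Rightarrow> ennreal.
           (\<forall>\<^sub>F R in at_top.
              (\<lambda>n. \<integral>\<^sup>+ r\<in>{R..}. ennreal (S r * \<rho>t n r) \<partial>lborel) \<longlonglongrightarrow> f R)
           \<and> (f \<longlongrightarrow> 1) at_top" using H by simp
  obtain f :: "real \<Rightarrow> ennreal" where
    fJ: "\<forall>\<^sub>F R in at_top. (\<lambda>n. \<integral>\<^sup>+ r\<in>{R..}. ennreal (S r * \<rho>t n r) \<partial>lborel) \<longlonglongrightarrow> f R"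
    and f1: "(f \<longlongrightarrow> 1) at_top"
    using fex by (elim exE conjE)
  have "\<forall>n. \<exists>Dn. (\<forall>r\<in>{0<..}. (\<rho>t n has_vector_derivative Dn r) (at r)) \<and> continuous_on {0<..} Dn"
    using C1 unfolding C1_differentiable_on_def by simp
  then obtain D where D: "\<forall>n. (\<forall>r\<in>{0<..}. (\<rho>t n has_vector_derivative D n r) (at r)) \<and> continuous_on {0<..} (D n)"
    by (rule choice[THEN exE])
  have gd: "\<And>n r. r > 0 \<Longrightarrow> (\<rho>t n has_real_derivative D n r) (at r)"
    using D by (simp add: has_real_derivative_iff_has_vector_derivative)
  have Dc: "\<And>n. continuous_on {0<..} (D n)" using D by blast
  have Dnp: "\<And>n r. r > 0 \<Longrightarrow> D n r \<le> 0"
    using deriv_nonpos_of_antimono[OF gd _ anti] by blast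
  have \<rho>cont: "\<And>n. continuous_on {0<..} (\<rho>t n)"
    using gd by (intro continuous_at_imp_continuous_on) (auto intro: DERIV_isCont)
  have Vd: "\<And>r. r > 0 \<Longrightarrow> (V has_real_derivative S r) (at r)"
  proof -
    fix r :: real assume "r > 0"
    then have "at r within {0..} = at r" by (intro at_within_interior) simp
    moreover have "(V has_real_derivative S r) (at r within {0..})" using V_deriv \<open>r > 0\<close> by simp
    ultimately show "(V has_real_derivative S r) (at r)" by simp
  qed
  have Sc: "continuous_on {0<..} S" by (rule continuous_on_subset[OF S_cont]) auto
  have Snn: "\<And>r. r > 0 \<Longrightarrow> S r \<ge> 0"
    using deriv_nonneg_of_mono[OF Vd _ V_strict] by blast
  have Vlt: "\<And>a b. 0 \<le> a \<Longrightarrow> a < b \<Longrightarrow> V a < V b"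
    using V_strict unfolding monotone_on_def by auto
  have Vmono: "\<And>a b. 0 < a \<Longrightarrow> a \<le> b \<Longrightarrow> V a \<le> V b"
    using Vlt by (metis less_eq_real_def)
  have Vpos: "\<And>r. r > 0 \<Longrightarrow> V r > 0"
    using Vlt[of 0] V_nonneg by (metis less_eq_real_def order_less_le_trans)
  have Vnn: "\<And>r. r > 0 \<Longrightarrow> V r \<ge> 0" using Vpos less_imp_le by blast
  have \<rho>pos: "\<And>n r. r > 0 \<Longrightarrow> \<rho>t n r > 0"
  proof (rule ccontr)
    fix n r assume r: "r > 0" and "\<not> \<rho>t n r > 0"
    then have c0: "\<rho>t n r \<le> 0" by simp
    let ?c = "\<rho>t n (r + 1)"
    have c: "?c < 0" using anti[of n] r c0 unfolding monotone_on_def by (smt (verit) greaterThan_iff)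
    have le: "\<And>s. s \<ge> r + 1 \<Longrightarrow> \<rho>t n s \<le> ?c"
      using anti[of n] r unfolding monotone_on_def by (smt (verit) greaterThan_iff)
    have "eventually (\<lambda>s. V s \<ge> 2 / (- ?c)) at_top" using V_lim by (simp add: filterlim_at_top)
    moreover have "eventually (\<lambda>s. \<bar>\<rho>t n s * V s\<bar> < 1) at_top"
      using lV[of n] by (simp add: tendsto_iff dist_real_def)
    moreover have "eventually (\<lambda>s. s \<ge> r + 1) at_top" by (rule eventually_ge_at_top)
    ultimately have "eventually (\<lambda>s. V s \<ge> 2 / (- ?c) \<and> \<bar>\<rho>t n s * V s\<bar> < 1 \<and> s \<ge> r + 1) at_top"
      by (intro eventually_conj)
    then obtain s where s: "V s \<ge> 2 / (- ?c)" "\<bar>\<rho>t n s * V s\<bar> < 1" "s \<ge> r + 1"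
      using eventually_happens'[OF trivial_limit_at_top_linorder] by blast
    then have "V s > 0" using Vpos r by simp
    have "\<rho>t n s * V s \<le> ?c * V s" using le[OF s(3)] \<open>V s > 0\<close> by (simp add: mult_right_mono)
    also have "?c * V s \<le> ?c * (2 / (- ?c))" by (rule mult_left_mono_neg[OF s(1)]) (use c in simp)
    also have "\<dots> = -2" using c by (simp add: field_simps)
    finally have False using s(2) by simp
    then show False by simp
  qed
  have \<rho>lim0: "\<And>n. (\<rho>t n \<longlongrightarrow> 0) at_top"
  proof -
    fix n
    have "((\<lambda>r. (\<rho>t n r * V r) * inverse (V r)) \<longlongrightarrow> 0 * 0) at_top"
      by (intro tendsto_mult lV tendsto_inverse_0_at_top V_lim)
    moreover have "eventually (\<lambda>r. (\<rho>t n r * V r) * inverse (V r) = \<rho>t n r) at_top"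
      using eventually_gt_at_top[of 0] proof eventually_elim
      case (elim r)
      then have "V r \<noteq> 0" using Vpos[of r] by simp
      then show ?case by (simp add: field_simps)
    qed
    ultimately show "(\<rho>t n \<longlongrightarrow> 0) at_top" by (simp add: tendsto_cong)
  qed
  have gnn: "\<And>n r. r > 0 \<Longrightarrow> \<rho>t n r \<ge> 0" using \<rho>pos less_imp_le by blast
  have sm: "sets m = sets borel" and spm: "space m = UNIV" using mms unfolding mms_def by auto
  obtain k R0 where k: "k > 0" and kb: "\<And>x r. r \<ge> R0 \<Longrightarrow> emeasure m (ball x r) \<le> ennreal (k * V r)"
    using growth by blast
  have sf: "sigma_finite_measure m"
    unfolding sigma_finite_measure_def
  proof (intro exI conjI)
    let ?x0 = "undefined :: 'a"
    let ?A = "range (\<lambda>i::nat. ball ?x0 (max R0 1 + real i))"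
    show "countable ?A" by simp
    show "?A \<subseteq> sets m" unfolding sm by auto
    have "y \<in> \<Union> ?A" for y
    proof -
      obtain i :: nat where "dist ?x0 y < real i" using reals_Archimedean2 by blast
      then have "y \<in> ball ?x0 (max R0 1 + real i)" by simp
      then show ?thesis by blast
    qed
    then show "\<Union> ?A = space m" unfolding spm by blast
    show "\<forall>a\<in>?A. emeasure m a \<noteq> \<infinity>"
    proof
      fix a assume "a \<in> ?A"
      then obtain i :: nat where a: "a = ball ?x0 (max R0 1 + real i)" by blast
      have "emeasure m a \<le> ennreal (k * V (max R0 1 + real i))" unfolding a by (rule kb) simp
      then show "emeasure m a \<noteq> \<infinity>" by (metis ennreal_neq_top top_unique infinity_ennreal_def)
    qed
  qed
  show ?thesis
  proof (intro conjI allI impI)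
    fix n and x y :: 'a assume "x \<noteq> y"
    then show "\<rho> n x y \<ge> 0" using req \<rho>pos[of "dist x y" n] by simp
  next
    fix n and x y :: 'a assume "x \<noteq> y"
    then show "\<rho> n x y = \<rho> n y x" using req by (simp add: dist_commute)
  next
    fix n
    show "(\<lambda>(x, y). if x \<noteq> y then \<rho> n x y else 0) \<in> borel_measurable (m \<Otimes>\<^sub>M m)"
      by (rule part_meas[OF sm spm sf gd Dc Dnp \<rho>cont Vd Sc Snn Vmono Vpos Vnn \<rho>pos gnn \<rho>lim0 lim0 req ratio fJ f1 k kb AVR])
  next
    fix x :: 'a
    note A = partA[OF sm spm sf gd Dc Dnp \<rho>cont Vd Sc Snn Vmono Vpos Vnn \<rho>pos gnn \<rho>lim0 lim0 req ratio fJ f1 k kb AVR, where x=x]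
    show "((\<lambda>R. limsup (\<lambda>n. \<integral>\<^sup>+ y\<in>{y. dist x y \<ge> R}. ennreal (\<rho> n x y) \<partial>m)) \<longlongrightarrow> L) at_top"
      using A by blast
    show "((\<lambda>R. liminf (\<lambda>n. \<integral>\<^sup>+ y\<in>{y. dist x y \<ge> R}. ennreal (\<rho> n x y) \<partial>m)) \<longlongrightarrow> L) at_top"
      using A by blast
  next
    fix u :: "'a \<Rightarrow> real" and R :: real
    assume um: "u \<in> borel_measurable m" and "\<exists>n0. energy m p (\<rho> n0) u < \<infinity>" and R: "R > 0"
    then obtain n0 where E: "energy m p (\<rho> n0) u < \<infinity>" by blast
    show "(\<lambda>n. \<integral>\<^sup>+ x. (\<integral>\<^sup>+ y\<in>{y. 0 < dist x y \<and> dist x y < R}.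
                   ennreal (\<bar>u x - u y\<bar> powr p * \<rho> n x y) \<partial>m) \<partial>m) \<longlonglongrightarrow> 0"
      by (rule partB[OF sm spm sf gd Dc Dnp \<rho>cont Vd Sc Snn Vmono Vpos Vnn \<rho>pos gnn \<rho>lim0 lim0 req ratio fJ f1 k kb AVR um E R])
  next
    show "\<exists>R0. \<forall>R\<ge>R0. \<exists>C::real. \<forall>x n.
          (\<integral>\<^sup>+ y\<in>{y. dist x y \<ge> R}. ennreal (\<rho> n x y) \<partial>m) \<le> ennreal C"
      by (rule partC[OF sm spm sf gd Dc Dnp \<rho>cont Vd Sc Snn Vmono Vpos Vnn \<rho>pos gnn \<rho>lim0 lim0 req ratio fJ f1 k kb AVR])
  qed
qed

end
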